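(* In a mirror graph $G$, any two distinct convex cycles intersect in the empty set, in a single vertex, or in a single edge.
   Context: A mirror graph is a finite connected simple graph $G$ admitting a partition $\{E_1,\dots,E_k\}$ of its edges such that for every $i$ there is an automorphism $\alpha_i$ swapping the endpoints of every edge of $E_i$, with $G-E_i$ having exactly two components that $\alpha_i$ maps isomorphically onto each other. A cycle is convex if every shortest path of $G$ between two of its vertices lies on it. *)

theory Defs
  imports Main "HOL-Library.Disjoint_Sets"
begin

definition simple_graph :: "'a set \<Rightarrow> 'a set set \<Rightarrow> bool" where
  "simple_graph V E \<longleftrightarrow> finite V \<and>
     (\<forall>e\<in>E. \<exists>u v. e = {u, v} \<and> u \<noteq> v \<and> u \<in> V \<and> v \<in> V)"

definition walk :: "'a set \<Rightarrow> 'a set set \<Rightarrow> 'a list \<Rightarrow> bool" where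
  "walk V E p \<longleftrightarrow> p \<noteq> [] \<and> set p \<subseteq> V \<and>
     (\<forall>i. Suc i < length p \<longrightarrow> {p ! i, p ! Suc i} \<in> E)"

definition reachable :: "'a set \<Rightarrow> 'a set set \<Rightarrow> 'a \<Rightarrow> 'a \<Rightarrow> bool" where
  "reachable V E u v \<longleftrightarrow> (\<exists>p. walk V E p \<and> hd p = u \<and> last p = v)"

definition connected_graph :: "'a set \<Rightarrow> 'a set set \<Rightarrow> bool" where
  "connected_graph V E \<longleftrightarrow> V \<noteq> {} \<and> (\<forall>u\<in>V. \<forall>v\<in>V. reachable V E u v)"

definition components :: "'a set \<Rightarrow> 'a set set \<Rightarrow> 'a set set" where
  "components V E = (\<lambda>v. {u \<in> V. reachable V E v u}) ` V"

definition automorphism :: "'a set \<Rightarrow> 'a set set \<Rightarrow> ('a \<Rightarrow> 'a) \<Rightarrow> bool" where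
  "automorphism V E f \<longleftrightarrow> bij_betw f V V \<and>
     (\<forall>u\<in>V. \<forall>v\<in>V. {u, v} \<in> E \<longleftrightarrow> {f u, f v} \<in> E)"

definition mirror_graph :: "'a set \<Rightarrow> 'a set set \<Rightarrow> bool" where
  "mirror_graph V E \<longleftrightarrow> simple_graph V E \<and> connected_graph V E \<and>
     (\<exists>P. finite P \<and> partition_on E P \<and>
        (\<forall>Ei\<in>P. \<exists>\<alpha>. automorphism V E \<alpha> \<and>
           (\<forall>u v. {u, v} \<in> Ei \<longrightarrow> \<alpha> u = v) \<and>
           (\<exists>C1 C2. C1 \<noteq> C2 \<and> components V (E - Ei) = {C1, C2} \<and> \<alpha> ` C1 = C2)))"

definition cycle_edges :: "'a list \<Rightarrow> 'a set set" where
  "cycle_edges c = {{c ! i, c ! ((i + 1) mod length c)} | i. i < length c}"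

definition is_cycle :: "'a set \<Rightarrow> 'a set set \<Rightarrow> 'a list \<Rightarrow> bool" where
  "is_cycle V E c \<longleftrightarrow> length c \<ge> 3 \<and> distinct c \<and> set c \<subseteq> V \<and> cycle_edges c \<subseteq> E"

definition dist :: "'a set \<Rightarrow> 'a set set \<Rightarrow> 'a \<Rightarrow> 'a \<Rightarrow> nat" where
  "dist V E u v = (LEAST n. \<exists>p. walk V E p \<and> hd p = u \<and> last p = v \<and> length p = Suc n)"

definition shortest_path :: "'a set \<Rightarrow> 'a set set \<Rightarrow> 'a \<Rightarrow> 'a \<Rightarrow> 'a list \<Rightarrow> bool" where
  "shortest_path V E u v p \<longleftrightarrow> walk V E p \<and> hd p = u \<and> last p = v \<and>
     length p = Suc (dist V E u v)"

definition convex_cycle :: "'a set \<Rightarrow> 'a set set \<Rightarrow> 'a list \<Rightarrow> bool" where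
  "convex_cycle V E c \<longleftrightarrow> is_cycle V E c \<and>
     (\<forall>u\<in>set c. \<forall>v\<in>set c. \<forall>p. shortest_path V E u v p \<longrightarrow>
        set p \<subseteq> set c \<and> (\<forall>i. Suc i < length p \<longrightarrow> {p ! i, p ! Suc i} \<in> cycle_edges c))"

end

theory Submission
  imports Defs
begin

lemma walk_single: "x \<in> V \<Longrightarrow> walk V E [x]"
  by (simp add: walk_def)

lemma dist_le:
  assumes "walk V E p" shows "dist V E (hd p) (last p) \<le> length p - 1"
proof -
  have "p \<noteq> []" using assms by (simp add: walk_def)
  then have "length p = Suc (length p - 1)" by simp
  then have "\<exists>q. walk V E q \<and> hd q = hd p \<and> last q = last p \<and> length q = Suc (length p - 1)"
    using assms by blast
  then show ?thesis unfolding dist_def by (rule Least_le)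
qed

lemma sp_exists:
  assumes "reachable V E u v" shows "\<exists>p. shortest_path V E u v p"
proof -
  from assms obtain p where p: "walk V E p" "hd p = u" "last p = v"
    by (auto simp: reachable_def)
  then have "p \<noteq> []" by (simp add: walk_def)
  then have "\<exists>n q. walk V E q \<and> hd q = u \<and> last q = v \<and> length q = Suc n"
    using p by (intro exI[of _ "length p - 1"] exI[of _ p]) auto
  then have "\<exists>q. walk V E q \<and> hd q = u \<and> last q = v \<and> length q = Suc (dist V E u v)"
    unfolding dist_def by (rule LeastI_ex)
  then show ?thesis by (auto simp: shortest_path_def)
qed

lemma walk_rev: "walk V E p \<Longrightarrow> walk V E (rev p)"
  unfolding walk_def
proof (intro conjI allI impI; (elim conjE)?)
  fix i assume h: "p \<noteq> []" "set p \<subseteq> V" "\<forall>i. Suc i < length p \<longrightarrow> {p ! i, p ! Suc i} \<in> E"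
    "Suc i < length (rev p)"
  then have "Suc (length p - Suc (Suc i)) < length p" by simp
  with h(3) have "{p ! (length p - Suc (Suc i)), p ! Suc (length p - Suc (Suc i))} \<in> E" by blast
  moreover have "Suc (length p - Suc (Suc i)) = length p - Suc i" using h(4) by simp
  ultimately show "{rev p ! i, rev p ! Suc i} \<in> E" using h(4)
    by (simp add: rev_nth insert_commute)
qed auto

lemma walk_append:
  assumes "walk V E p" "walk V E q" "last p = hd q"
  shows "walk V E (p @ tl q)"
  unfolding walk_def
proof (intro conjI allI impI)
  show "p @ tl q \<noteq> []" using assms by (simp add: walk_def)
  show "set (p @ tl q) \<subseteq> V" using assms by (auto simp: walk_def dest: list.set_sel(2))
  fix i assume i: "Suc i < length (p @ tl q)"
  have pne: "p \<noteq> []" and qne: "q \<noteq> []" using assms by (auto simp: walk_def)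
  show "{(p @ tl q) ! i, (p @ tl q) ! Suc i} \<in> E"
  proof (cases "Suc i < length p")
    case True then show ?thesis using assms(1) by (simp add: walk_def nth_append)
  next
    case False
    note F = False
    show ?thesis
    proof (cases "i < length p")
      case True
      then have "i = length p - 1" using F by simp
      then have "(p @ tl q) ! i = q ! 0" using pne qne assms(3)
        by (simp add: nth_append last_conv_nth hd_conv_nth)
      moreover have "(p @ tl q) ! Suc i = q ! 1" using \<open>i = length p - 1\<close> pne qne i
        by (simp add: nth_append nth_tl)
      moreover have "Suc 0 < length q" using i F by auto
      ultimately show ?thesis using assms(2) by (simp add: walk_def)
    next
      case False
      then have "(p @ tl q) ! i = q ! (Suc (i - length p))" "(p @ tl q) ! Suc i = q ! Suc (Suc (i - length p))"
        using qne by (auto simp: nth_append neq_Nil_conv Suc_diff_le)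
      moreover have "Suc (Suc (i - length p)) < length q" using i False by auto
      ultimately show ?thesis using assms(2) by (simp add: walk_def)
    qed
  qed
qed

lemma reach_refl: "x \<in> V \<Longrightarrow> reachable V E x x"
  unfolding reachable_def by (intro exI[of _ "[x]"]) (simp add: walk_def)

lemma reach_sym: "reachable V E x y \<Longrightarrow> reachable V E y x"
  unfolding reachable_def by (metis walk_rev hd_rev last_rev)

lemma reach_trans: "reachable V E x y \<Longrightarrow> reachable V E y z \<Longrightarrow> reachable V E x z"
  unfolding reachable_def
proof (elim exE conjE)
  fix p q assume h: "walk V E p" "hd p = x" "last p = y" "walk V E q" "hd q = y" "last q = z"
  have "walk V E (p @ tl q)" using h by (intro walk_append) auto
  moreover have "hd (p @ tl q) = x" using h by (cases p) (auto simp: walk_def)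
  moreover have "last (p @ tl q) = z"
  proof (cases "tl q = []")
    case True
    then have "q = [y]" using h by (cases q) (auto simp: walk_def)
    then show ?thesis using h True by simp
  next
    case False
    then have "last (tl q) = last q" by (cases q) auto
    then show ?thesis using h False by simp
  qed
  ultimately show "\<exists>p. walk V E p \<and> hd p = x \<and> last p = z" by blast
qed

lemma reach_V: "reachable V E x y \<Longrightarrow> x \<in> V \<and> y \<in> V"
  unfolding reachable_def walk_def by (auto dest: hd_in_set last_in_set)

definition mdata :: "'a set \<Rightarrow> 'a set set \<Rightarrow> ('a \<Rightarrow> 'a) \<Rightarrow> 'a set \<Rightarrow> 'a set \<Rightarrow> bool" where
  "mdata V E \<alpha> C1 C2 \<longleftrightarrow> automorphism V E \<alpha> \<and> C1 \<union> C2 = V \<and> C1 \<inter> C2 = {} \<and>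
     \<alpha> ` C1 = C2 \<and> \<alpha> ` C2 = C1 \<and>
     (\<forall>x y. {x, y} \<in> E \<longrightarrow> x \<in> C1 \<longrightarrow> y \<in> C2 \<longrightarrow> \<alpha> x = y \<and> \<alpha> y = x)"

lemma mdata_swap: "mdata V E \<alpha> C1 C2 \<Longrightarrow> mdata V E \<alpha> C2 C1"
  unfolding mdata_def by (simp add: Int_commute Un_commute insert_commute)

lemma mdata_exists:
  assumes mg: "mirror_graph V E" and e: "{b, c} \<in> E"
  shows "\<exists>\<alpha> C1 C2. mdata V E \<alpha> C1 C2 \<and> \<alpha> b = c \<and> \<alpha> c = b"
proof -
  from mg obtain P where P: "partition_on E P" and
    H: "\<forall>Ei\<in>P. \<exists>\<alpha>. automorphism V E \<alpha> \<and> (\<forall>u v. {u, v} \<in> Ei \<longrightarrow> \<alpha> u = v) \<and>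
           (\<exists>C1 C2. C1 \<noteq> C2 \<and> components V (E - Ei) = {C1, C2} \<and> \<alpha> ` C1 = C2)"
    unfolding mirror_graph_def by blast
  from P e obtain Ei where Ei: "Ei \<in> P" "{b, c} \<in> Ei"
    by (auto simp: partition_on_def)
  obtain \<alpha> where aut: "automorphism V E \<alpha>" and
    sw: "\<forall>u v. {u, v} \<in> Ei \<longrightarrow> \<alpha> u = v" and
    ex: "\<exists>C1 C2. C1 \<noteq> C2 \<and> components V (E - Ei) = {C1, C2} \<and> \<alpha> ` C1 = C2"
    using bspec[OF H Ei(1)] by meson
  from ex obtain C1 C2 where C: "C1 \<noteq> C2" "components V (E - Ei) = {C1, C2}" "\<alpha> ` C1 = C2"
    by (elim exE conjE) (rule that)
  have EiE: "Ei \<subseteq> E" using P Ei by (auto simp: partition_on_def)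
  define R where "R = reachable V (E - Ei)"
  have comp: "components V (E - Ei) = (\<lambda>v. {u \<in> V. R v u}) ` V"
    by (simp add: components_def R_def)
  have "C1 \<in> (\<lambda>v. {u \<in> V. R v u}) ` V" "C2 \<in> (\<lambda>v. {u \<in> V. R v u}) ` V"
    unfolding comp[symmetric] C(2) by simp_all
  then obtain x1 x2 where x1: "x1 \<in> V" "C1 = {u \<in> V. R x1 u}" and x2: "x2 \<in> V" "C2 = {u \<in> V. R x2 u}"
    by (elim imageE) (rule that)
  have Rrefl: "\<And>x. x \<in> V \<Longrightarrow> R x x" by (simp add: R_def reach_refl)
  have Rsym: "\<And>x y. R x y \<Longrightarrow> R y x" by (simp add: R_def reach_sym)
  have Rtrans: "\<And>x y z. R x y \<Longrightarrow> R y z \<Longrightarrow> R x z" unfolding R_def by (rule reach_trans)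
  have cov: "C1 \<union> C2 = V"
  proof
    show "C1 \<union> C2 \<subseteq> V" using x1 x2 by auto
    show "V \<subseteq> C1 \<union> C2"
    proof
      fix v assume "v \<in> V"
      then have "{u \<in> V. R v u} \<in> (\<lambda>v. {u \<in> V. R v u}) ` V" by (rule imageI)
      then have "{u \<in> V. R v u} \<in> {C1, C2}" unfolding comp[symmetric] C(2) .
      then show "v \<in> C1 \<union> C2" using Rrefl \<open>v \<in> V\<close> by auto
    qed
  qed
  have disj: "C1 \<inter> C2 = {}"
  proof (rule ccontr)
    assume "C1 \<inter> C2 \<noteq> {}"
    then obtain v where "R x1 v" "R x2 v" using x1 x2 by auto
    then have "C1 = C2" using x1 x2 Rsym Rtrans by blast
    with C(1) show False by simp
  qed
  have bij: "bij_betw \<alpha> V V" using aut by (simp add: automorphism_def)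
  have img2: "\<alpha> ` C2 = C1"
  proof -
    have "C2 = V - C1" using cov disj by blast
    moreover have "C1 \<subseteq> V" using cov by blast
    moreover have "inj_on \<alpha> V" using bij by (simp add: bij_betw_def)
    ultimately have "\<alpha> ` C2 = \<alpha> ` V - \<alpha> ` C1"
      by (simp add: inj_on_image_set_diff)
    also have "\<dots> = V - C2" using bij C(3) by (simp add: bij_betw_def)
    also have "\<dots> = C1" using cov disj by blast
    finally show ?thesis .
  qed
  have cross: "\<forall>x y. {x, y} \<in> E \<longrightarrow> x \<in> C1 \<longrightarrow> y \<in> C2 \<longrightarrow> \<alpha> x = y \<and> \<alpha> y = x"
  proof (intro allI impI)
    fix x y assume xy: "{x, y} \<in> E" "x \<in> C1" "y \<in> C2"
    have "{x, y} \<in> Ei"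
    proof (rule ccontr)
      assume "{x, y} \<notin> Ei"
      then have "walk V (E - Ei) [x, y]" using xy x1 x2 by (auto simp: walk_def less_Suc_eq)
      then have "R x y" unfolding R_def reachable_def by fastforce
      then have "y \<in> C1" using xy x1 x2 Rtrans by auto
      then show False using xy disj by auto
    qed
    then show "\<alpha> x = y \<and> \<alpha> y = x" using sw by (metis insert_commute)
  qed
  have "\<alpha> b = c" "\<alpha> c = b" using sw Ei(2) by (auto simp: insert_commute)
  then show ?thesis using aut cov disj C(3) img2 cross unfolding mdata_def by blast
qed

definition cseq :: "'a set \<Rightarrow> 'a set set \<Rightarrow> int \<Rightarrow> (int \<Rightarrow> 'a) \<Rightarrow> 'a set set \<Rightarrow> bool" where
  "cseq V E m z EC \<longleftrightarrow> 3 \<le> m \<and> (\<forall>j k. z j = z k \<longleftrightarrow> m dvd (j - k)) \<and>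
     EC = range (\<lambda>j. {z j, z (j + 1)}) \<and> range z \<subseteq> V \<and> EC \<subseteq> E \<and>
     (\<forall>u\<in>range z. \<forall>v\<in>range z. \<forall>p. shortest_path V E u v p \<longrightarrow>
        (\<forall>i. Suc i < length p \<longrightarrow> {p ! i, p ! Suc i} \<in> EC))"

lemma cseq_shift:
  assumes "cseq V E m z EC" shows "cseq V E m (\<lambda>i. z (c + i)) EC"
proof -
  have r: "range (\<lambda>i. z (c + i)) = range z"
  proof (rule set_eqI, rule iffI)
    fix x assume "x \<in> range z" then obtain j where "x = z j" by auto
    then have "x = z (c + (j - c))" by simp
    then show "x \<in> range (\<lambda>i. z (c + i))" by blast
  qed auto
  have e: "range (\<lambda>j. {z (c + j), z (c + (j + 1))}) = range (\<lambda>j. {z j, z (j + 1)})"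
  proof (rule set_eqI, rule iffI)
    fix x assume "x \<in> range (\<lambda>j. {z j, z (j + 1)})" then obtain j where "x = {z j, z (j + 1)}" by auto
    then have "x = {z (c + (j - c)), z (c + ((j - c) + 1))}" by simp
    then show "x \<in> range (\<lambda>j. {z (c + j), z (c + (j + 1))})" by blast
  next
    fix x assume "x \<in> range (\<lambda>j. {z (c + j), z (c + (j + 1))})"
    then obtain j where "x = {z (c + j), z (c + (j + 1))}" by auto
    then have "x = {z (c + j), z ((c + j) + 1)}" by (simp add: add.assoc)
    then show "x \<in> range (\<lambda>j. {z j, z (j + 1)})" by blast
  qed
  have d: "\<And>j k. (z (c + j) = z (c + k)) = (m dvd (j - k))"
    using assms unfolding cseq_def by simp
  show ?thesis unfolding cseq_def r d
  proof (intro conjI)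
    show "3 \<le> m" "range z \<subseteq> V" "EC \<subseteq> E" using assms by (auto simp: cseq_def)
    show "\<forall>j k. m dvd (j - k) \<longleftrightarrow> m dvd (j - k)" by simp
    show "EC = range (\<lambda>j. {z (c + j), z (c + (j + 1))})" using assms e by (simp add: cseq_def)
    show "\<forall>u\<in>range z. \<forall>v\<in>range z. \<forall>p. shortest_path V E u v p \<longrightarrow>
        (\<forall>i. Suc i < length p \<longrightarrow> {p ! i, p ! Suc i} \<in> EC)" using assms unfolding cseq_def by blast
  qed
qed

lemma cseq_refl:
  assumes "cseq V E m z EC" shows "cseq V E m (\<lambda>i. z (c - i)) EC"
proof -
  have r: "range (\<lambda>i. z (c - i)) = range z"
  proof (rule set_eqI, rule iffI)
    fix x assume "x \<in> range z" then obtain j where "x = z j" by auto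
    then have "x = z (c - (c - j))" by simp
    then show "x \<in> range (\<lambda>i. z (c - i))" by blast
  qed auto
  have e: "range (\<lambda>j. {z (c - j), z (c - (j + 1))}) = range (\<lambda>j. {z j, z (j + 1)})"
  proof (rule set_eqI, rule iffI)
    fix x assume "x \<in> range (\<lambda>j. {z j, z (j + 1)})" then obtain j where "x = {z j, z (j + 1)}" by auto
    then have "x = {z (c - (c - j - 1)), z (c - ((c - j - 1) + 1))}" by (simp add: insert_commute)
    then show "x \<in> range (\<lambda>j. {z (c - j), z (c - (j + 1))})" by blast
  next
    fix x assume "x \<in> range (\<lambda>j. {z (c - j), z (c - (j + 1))})"
    then obtain j where "x = {z (c - j), z (c - (j + 1))}" by auto
    then have "x = {z (c - j - 1), z ((c - j - 1) + 1)}" by (simp add: insert_commute algebra_simps)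
    then show "x \<in> range (\<lambda>j. {z j, z (j + 1)})" by blast
  qed
  have d: "\<And>j k. (z (c - j) = z (c - k)) = (m dvd (j - k))"
  proof -
    fix j k
    have "(z (c - j) = z (c - k)) = (m dvd ((c - j) - (c - k)))" using assms unfolding cseq_def by simp
    also have "\<dots> = (m dvd (- (j - k)))" by (simp add: algebra_simps)
    finally show "(z (c - j) = z (c - k)) = (m dvd (j - k))" by (metis dvd_minus_iff minus_diff_eq)
  qed
  show ?thesis unfolding cseq_def r d
  proof (intro conjI)
    show "3 \<le> m" "range z \<subseteq> V" "EC \<subseteq> E" using assms by (auto simp: cseq_def)
    show "\<forall>j k. m dvd (j - k) \<longleftrightarrow> m dvd (j - k)" by simp
    show "EC = range (\<lambda>j. {z (c - j), z (c - (j + 1))})" using assms e by (simp add: cseq_def)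
    show "\<forall>u\<in>range z. \<forall>v\<in>range z. \<forall>p. shortest_path V E u v p \<longrightarrow>
        (\<forall>i. Suc i < length p \<longrightarrow> {p ! i, p ! Suc i} \<in> EC)" using assms unfolding cseq_def by blast
  qed
qed

lemma cseq_eq: "cseq V E m z EC \<Longrightarrow> z j = z k \<longleftrightarrow> m dvd (j - k)"
  unfolding cseq_def by (elim conjE) simp

lemma cseq_edge: "cseq V E m z EC \<Longrightarrow> {z j, z (j + 1)} \<in> EC"
  unfolding cseq_def by (elim conjE) simp

lemma cseq_EC: "cseq V E m z EC \<Longrightarrow> EC = range (\<lambda>j. {z j, z (j + 1)})"
  unfolding cseq_def by (elim conjE)

lemma edge_nb:
  assumes c: "cseq V E m z EC" shows "{z p, w} \<in> EC \<longleftrightarrow> w = z (p - 1) \<or> w = z (p + 1)"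
proof
  assume "{z p, w} \<in> EC"
  then obtain t where "{z p, w} = {z t, z (t + 1)}" unfolding cseq_EC[OF c] by (elim rangeE)
  then have "z p = z t \<and> w = z (t + 1) \<or> z p = z (t + 1) \<and> w = z t" by (simp add: doubleton_eq_iff)
  then show "w = z (p - 1) \<or> w = z (p + 1)"
  proof
    assume h: "z p = z t \<and> w = z (t + 1)"
    then have "m dvd (p - t)" using cseq_eq[OF c] by blast
    then have "z (p + 1) = z (t + 1)" using cseq_eq[OF c] by simp
    then show ?thesis using h by simp
  next
    assume h: "z p = z (t + 1) \<and> w = z t"
    then have "m dvd (p - (t + 1))" using cseq_eq[OF c] by blast
    then have "m dvd ((p - 1) - t)" by (simp add: algebra_simps)
    then have "z (p - 1) = z t" using cseq_eq[OF c] by simp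
    then show ?thesis using h by simp
  qed
next
  assume "w = z (p - 1) \<or> w = z (p + 1)"
  then show "{z p, w} \<in> EC"
  proof
    assume "w = z (p - 1)"
    then have "{z p, w} = {z (p - 1), z ((p - 1) + 1)}" by (simp add: insert_commute)
    then show ?thesis using cseq_edge[OF c, of "p - 1"] by simp
  qed (simp add: cseq_edge[OF c])
qed

lemma nb_distinct:
  assumes c: "cseq V E m z EC" shows "z (p - 1) \<noteq> z (p + 1)" "z p \<noteq> z (p + 1)" "z p \<noteq> z (p - 1)"
proof -
  have m: "3 \<le> m" using c by (simp add: cseq_def)
  have n2: "\<not> m dvd 2" using m by (auto dest: zdvd_imp_le)
  have n1: "\<not> m dvd 1" using m by (auto dest: zdvd_imp_le)
  show "z (p - 1) \<noteq> z (p + 1)"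
  proof
    assume "z (p - 1) = z (p + 1)"
    then have "m dvd ((p - 1) - (p + 1))" using cseq_eq[OF c] by blast
    then have "m dvd 2" by simp
    with n2 show False ..
  qed
  show "z p \<noteq> z (p + 1)"
  proof
    assume "z p = z (p + 1)"
    then have "m dvd (p - (p + 1))" using cseq_eq[OF c] by blast
    then have "m dvd 1" by simp
    with n1 show False ..
  qed
  show "z p \<noteq> z (p - 1)"
  proof
    assume "z p = z (p - 1)"
    then have "m dvd (p - (p - 1))" using cseq_eq[OF c] by blast
    then have "m dvd 1" by simp
    with n1 show False ..
  qed
qed

lemma cwalk:
  assumes c: "cseq V E m z EC"
  shows "p \<noteq> [] \<Longrightarrow> (\<forall>i. Suc i < length p \<longrightarrow> {p ! i, p ! Suc i} \<in> EC) \<Longrightarrow> hd p = z x \<Longrightarrow> last p = z y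
    \<Longrightarrow> \<exists>s. \<bar>s\<bar> \<le> int (length p) - 1 \<and> m dvd (y - x - s)"
proof (induction p arbitrary: x)
  case Nil then show ?case by simp
next
  case (Cons u q)
  show ?case
  proof (cases "q = []")
    case True
    then have "z x = z y" using Cons.prems(3,4) by simp
    then have "m dvd (y - x)" using cseq_eq[OF c] by metis
    then have "m dvd (y - x - 0)" by simp
    then show ?thesis by (intro exI[of _ 0]) simp
  next
    case False
    have ed: "\<forall>i. Suc i < length q \<longrightarrow> {q ! i, q ! Suc i} \<in> EC"
      proof (intro allI impI)
      fix i assume "Suc i < length q"
      then have "Suc (Suc i) < length (u # q)" by simp
      then have "{(u # q) ! Suc i, (u # q) ! Suc (Suc i)} \<in> EC" using Cons.prems(2) by blast
      then show "{q ! i, q ! Suc i} \<in> EC" by simp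
    qed
    have "Suc 0 < length (u # q)" using False by simp
    then have "{(u # q) ! 0, (u # q) ! Suc 0} \<in> EC" using Cons.prems(2) by blast
    then have "{z x, hd q} \<in> EC" using Cons.prems(3) False by (simp add: hd_conv_nth)
    then have "hd q = z (x - 1) \<or> hd q = z (x + 1)" using edge_nb[OF c] by blast
    then obtain x' e where x': "hd q = z x'" "x' = x + e" "\<bar>e\<bar> = 1"
    proof
      assume "hd q = z (x - 1)" then show ?thesis by (intro that[of "x - 1" "-1"]) auto
    next
      assume "hd q = z (x + 1)" then show ?thesis by (intro that[of "x + 1" "1"]) auto
    qed
    have "last q = z y" using Cons.prems(4) False by simp
    from Cons.IH[OF False ed x'(1) this] obtain s where s: "\<bar>s\<bar> \<le> int (length q) - 1" "m dvd (y - x' - s)" by blast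
    have eq: "y - x - (s + e) = y - x' - s" using x' by simp
    have "m dvd (y - x - (s + e))" unfolding eq using s(2) .
    moreover have "\<bar>s + e\<bar> \<le> int (length (u # q)) - 1" using s x' by simp
    ultimately show ?thesis by blast
  qed
qed

lemma arith1:
  fixes m k s :: int
  assumes "m dvd (k + 1 - s)" "\<bar>s\<bar> \<le> k - 1" "1 \<le> k" "k \<le> m - 1"
  shows "m \<le> 2 * k"
proof -
  obtain t where t: "k + 1 - s = m * t" using assms(1) by (auto elim: dvdE)
  have m: "m \<ge> 2" using assms by simp
  show ?thesis
  proof (cases "t \<le> 0")
    case True
    then have "m * t \<le> 0" using m by (simp add: mult_nonneg_nonpos)
    then show ?thesis using t assms(2) by simp
  next
    case False
    then have "m * t \<ge> m * 1" using m by (intro mult_left_mono) auto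
    then show ?thesis using t assms(2) by simp
  qed
qed

lemma arith2:
  fixes K s :: int
  assumes "(2 * K) dvd (1 + K - s)" "2 \<le> K"
  shows "K - 1 \<le> \<bar>s\<bar>"
proof -
  obtain t where t: "1 + K - s = (2 * K) * t" using assms(1) by (auto elim: dvdE)
  consider "t \<le> -1" | "t = 0" | "t = 1" | "t \<ge> 2" by linarith
  then show ?thesis
  proof cases
    case 1
    then have "(2 * K) * t \<le> (2 * K) * (-1)" using assms(2) by (intro mult_left_mono) auto
    then show ?thesis using t by simp
  next
    case 2 then show ?thesis using t by simp
  next
    case 3 then show ?thesis using t by simp
  next
    case 4
    then have "(2 * K) * t \<ge> (2 * K) * 2" using assms(2) by (intro mult_left_mono) auto
    then show ?thesis using t by simp
  qed
qed

lemma cseq_conv: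
  assumes "cseq V E m z EC" "u \<in> range z" "v \<in> range z" "shortest_path V E u v p" "Suc i < length p"
  shows "{p ! i, p ! Suc i} \<in> EC"
proof -
  have "\<forall>u\<in>range z. \<forall>v\<in>range z. \<forall>p. shortest_path V E u v p \<longrightarrow>
        (\<forall>i. Suc i < length p \<longrightarrow> {p ! i, p ! Suc i} \<in> EC)"
    using assms(1) unfolding cseq_def by (elim conjE)
  then have "\<forall>v\<in>range z. \<forall>p. shortest_path V E u v p \<longrightarrow>
        (\<forall>i. Suc i < length p \<longrightarrow> {p ! i, p ! Suc i} \<in> EC)" using assms(2) by (rule bspec)
  then have "\<forall>p. shortest_path V E u v p \<longrightarrow>
        (\<forall>i. Suc i < length p \<longrightarrow> {p ! i, p ! Suc i} \<in> EC)" using assms(3) by (rule bspec)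
  then show ?thesis using assms(4,5) by simp
qed

lemma cseq_V:
  assumes "cseq V E m z EC" shows "z j \<in> V"
proof -
  have "range z \<subseteq> V" using assms unfolding cseq_def by (elim conjE)
  then show ?thesis by auto
qed

lemma cseq_E: "cseq V E m z EC \<Longrightarrow> EC \<subseteq> E"
  unfolding cseq_def by (elim conjE)

lemma cseq_m: "cseq V E m z EC \<Longrightarrow> 3 \<le> m"
  unfolding cseq_def by (elim conjE)

lemma lowb:
  assumes c: "cseq V E m z EC" and cg: "connected_graph V E"
  shows "\<exists>s. \<bar>s\<bar> \<le> int (dist V E (z x) (z y)) \<and> m dvd (y - x - s)"
proof -
  have "reachable V E (z x) (z y)" using cg cseq_V[OF c] by (simp add: connected_graph_def)
  then obtain p where p: "shortest_path V E (z x) (z y) p" using sp_exists by metis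
  have ed: "\<forall>i. Suc i < length p \<longrightarrow> {p ! i, p ! Suc i} \<in> EC"
    using cseq_conv[OF c _ _ p] by blast
  have pw: "p \<noteq> []" "hd p = z x" "last p = z y" "length p = Suc (dist V E (z x) (z y))"
    using p by (auto simp: shortest_path_def walk_def)
  from cwalk[OF c pw(1) ed pw(2) pw(3)] obtain s where "\<bar>s\<bar> \<le> int (length p) - 1" "m dvd (y - x - s)"
    by blast
  then show ?thesis using pw(4) by (intro exI[of _ s]) simp
qed

lemma segwalk:
  assumes c: "cseq V E m z EC" and aut: "automorphism V E \<alpha>" and L: "1 \<le> L"
  shows "walk V E (map (\<lambda>n. \<alpha> (z (c + int n))) [0..<L])"
  unfolding walk_def
proof (intro conjI allI impI)
  show "map (\<lambda>n. \<alpha> (z (c + int n))) [0..<L] \<noteq> []" using L by simp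
  have bij: "bij_betw \<alpha> V V" using aut by (simp add: automorphism_def)
  have av: "\<And>x. x \<in> V \<Longrightarrow> \<alpha> x \<in> V" using bij by (simp add: bij_betw_def image_subset_iff[symmetric]) blast
  show "set (map (\<lambda>n. \<alpha> (z (c + int n))) [0..<L]) \<subseteq> V" using av cseq_V[OF c] by auto
  fix i assume i: "Suc i < length (map (\<lambda>n. \<alpha> (z (c + int n))) [0..<L])"
  have "{z (c + int i), z ((c + int i) + 1)} \<in> E" using cseq_edge[OF c] cseq_E[OF c] by blast
  then have "{\<alpha> (z (c + int i)), \<alpha> (z ((c + int i) + 1))} \<in> E"
    using aut cseq_V[OF c] by (simp add: automorphism_def)
  moreover have "map (\<lambda>n. \<alpha> (z (c + int n))) [0..<L] ! i = \<alpha> (z (c + int i))"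
    "map (\<lambda>n. \<alpha> (z (c + int n))) [0..<L] ! Suc i = \<alpha> (z ((c + int i) + 1))"
    using i by (simp_all add: ac_simps)
  ultimately show "{map (\<lambda>n. \<alpha> (z (c + int n))) [0..<L] ! i, map (\<lambda>n. \<alpha> (z (c + int n))) [0..<L] ! Suc i} \<in> E"
    by (simp only:)
qed

lemma mdata_aut: "mdata V E \<alpha> C1 C2 \<Longrightarrow> automorphism V E \<alpha>"
  unfolding mdata_def by (elim conjE)

lemma mdata_cov: "mdata V E \<alpha> C1 C2 \<Longrightarrow> C1 \<union> C2 = V"
  unfolding mdata_def by (elim conjE)

lemma mdata_disj: "mdata V E \<alpha> C1 C2 \<Longrightarrow> C1 \<inter> C2 = {}"
  unfolding mdata_def by (elim conjE)

lemma mdata_img: "mdata V E \<alpha> C1 C2 \<Longrightarrow> \<alpha> ` C1 = C2"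
  unfolding mdata_def by (elim conjE)

lemma mdata_cross: "mdata V E \<alpha> C1 C2 \<Longrightarrow> {x, y} \<in> E \<Longrightarrow> x \<in> C1 \<Longrightarrow> y \<in> C2 \<Longrightarrow> \<alpha> x = y \<and> \<alpha> y = x"
  unfolding mdata_def by (elim conjE) blast

lemma half:
  assumes c: "cseq V E m z EC" and cg: "connected_graph V E" and md: "mdata V E \<alpha> C1 C2"
    and z0: "z 0 \<in> C1" and a0: "\<alpha> (z 0) = z 1" and a1: "\<alpha> (z 1) = z 0"
  shows "\<exists>k::nat. 1 \<le> k \<and> int k \<le> m - 1 \<and> m \<le> 2 * int k \<and> (\<forall>i. 1 \<le> i \<and> i \<le> int k \<longrightarrow> z i \<in> C2) \<and>
     z (int k + 1) \<in> C1"
proof -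
  have m3: "3 \<le> m" using cseq_m[OF c] .
  have "\<alpha> (z 0) \<in> \<alpha> ` C1" using z0 by (rule imageI)
  then have z1: "z 1 \<in> C2" using mdata_img[OF md] a0 by simp
  define Q where "Q n \<longleftrightarrow> 1 \<le> n \<and> z (int n + 1) \<in> C1" for n :: nat
  have "z (int (nat (m - 1)) + 1) = z 0" using m3 cseq_eq[OF c] by simp
  then have Qm: "Q (nat (m - 1))" using z0 m3 by (simp add: Q_def)
  define k where "k = (LEAST n. Q n)"
  have Qk: "Q k" unfolding k_def using Qm by (rule LeastI)
  have km: "k \<le> nat (m - 1)" unfolding k_def using Qm by (rule Least_le)
  have k1: "1 \<le> k" and zk1: "z (int k + 1) \<in> C1" using Qk by (auto simp: Q_def)
  have inC2: "\<forall>i. 1 \<le> i \<and> i \<le> int k \<longrightarrow> z i \<in> C2"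
  proof (intro allI impI)
    fix i :: int assume i: "1 \<le> i \<and> i \<le> int k"
    show "z i \<in> C2"
    proof (cases "i = 1")
      case True then show ?thesis using z1 by simp
    next
      case False
      then have "nat (i - 1) < k" "1 \<le> nat (i - 1)" using i by auto
      then have "\<not> Q (nat (i - 1))" unfolding k_def using not_less_Least by blast
      then have "z i \<notin> C1" using \<open>1 \<le> nat (i - 1)\<close> i by (simp add: Q_def)
      moreover have "z i \<in> V" using cseq_V[OF c] .
      ultimately show ?thesis using mdata_cov[OF md] by blast
    qed
  qed
  have zk: "z (int k) \<in> C2" using inC2 k1 by simp
  have "{z (int k), z (int k + 1)} \<in> E" using cseq_edge[OF c] cseq_E[OF c] by blast
  then have "{z (int k + 1), z (int k)} \<in> E" by (simp add: insert_commute)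
  from mdata_cross[OF md this zk1 zk] have ak: "\<alpha> (z (int k)) = z (int k + 1)" by simp
  define W where "W = map (\<lambda>n. \<alpha> (z (1 + int n))) [0..<k]"
  have Ww: "walk V E W" unfolding W_def using segwalk[OF c mdata_aut[OF md] k1] .
  have "hd W = z 0" using k1 a1 by (simp add: W_def hd_map)
  moreover have "last W = z (int k + 1)"
  proof -
    have "last W = \<alpha> (z (1 + int (k - 1)))" using k1 by (simp add: W_def last_map)
    also have "1 + int (k - 1) = int k" using k1 by simp
    finally show ?thesis using ak by simp
  qed
  moreover have "length W = k" by (simp add: W_def)
  ultimately have dl: "dist V E (z 0) (z (int k + 1)) \<le> k - 1" using dist_le[OF Ww] by simp
  from lowb[OF c cg, of 0 "int k + 1"] obtain s where
    s: "\<bar>s\<bar> \<le> int (dist V E (z 0) (z (int k + 1)))" "m dvd (int k + 1 - 0 - s)" by blast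
  have "\<bar>s\<bar> \<le> int k - 1" using s(1) dl k1 by linarith
  moreover have "m dvd (int k + 1 - s)" using s(2) by simp
  ultimately have "m \<le> 2 * int k" using arith1[of m "int k" s] k1 km by linarith
  then show ?thesis using k1 km inC2 zk1 by (intro exI[of _ k]) auto
qed

lemma core:
  assumes c: "cseq V E m z EC" and cg: "connected_graph V E" and md: "mdata V E \<alpha> C1 C2"
    and z0: "z 0 \<in> C1" and a0: "\<alpha> (z 0) = z 1" and a1: "\<alpha> (z 1) = z 0"
  shows "{z 1, \<alpha> (z (-1))} \<in> EC"
proof -
  have m3: "3 \<le> m" using cseq_m[OF c] .
  from half[OF c cg md z0 a0 a1] obtain k :: nat where
    k: "1 \<le> k" "int k \<le> m - 1" "m \<le> 2 * int k" "\<forall>i. 1 \<le> i \<and> i \<le> int k \<longrightarrow> z i \<in> C2" by blast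
  define w where "w = (\<lambda>i. z (1 - i))"
  have cw: "cseq V E m w EC" unfolding w_def by (rule cseq_refl[OF c])
  have "\<alpha> (z 0) \<in> \<alpha> ` C1" using z0 by (rule imageI)
  then have z1: "z 1 \<in> C2" using mdata_img[OF md] a0 by simp
  have w0: "w 0 \<in> C2" using z1 by (simp add: w_def)
  have wa0: "\<alpha> (w 0) = w 1" "\<alpha> (w 1) = w 0" using a0 a1 by (simp_all add: w_def)
  from half[OF cw cg mdata_swap[OF md] w0 wa0] obtain k' :: nat where
    k': "1 \<le> k'" "int k' \<le> m - 1" "m \<le> 2 * int k'" "\<forall>i. 1 \<le> i \<and> i \<le> int k' \<longrightarrow> w i \<in> C1"
      "w (int k' + 1) \<in> C2" by blast
  have disj: "C1 \<inter> C2 = {}" using mdata_disj[OF md] .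
  have kk: "int k + int k' \<le> m"
  proof (rule ccontr)
    assume "\<not> int k + int k' \<le> m"
    define q where "q = 1 - int k' + m"
    have "1 \<le> q \<and> q \<le> int k" using \<open>\<not> int k + int k' \<le> m\<close> k'(2) unfolding q_def by linarith
    then have A: "z q \<in> C2" using k(4) by blast
    have "m dvd (q - (1 - int k'))" unfolding q_def by simp
    then have B: "z q = z (1 - int k')" using cseq_eq[OF c] by blast
    have "w (int k') \<in> C1" using k'(4) k'(1) by simp
    then have "z (1 - int k') \<in> C1" by (simp add: w_def)
    then have "z q \<in> C1" using B by simp
    then show False using disj A by blast
  qed
  have mk: "m = 2 * int k'" using kk k(3) k'(3) by linarith
  have K2: "2 \<le> int k'" using mk m3 by linarith
  have zk'C2: "z (- int k') \<in> C2" using k'(5) by (simp add: w_def)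
  have "w (int k') \<in> C1" using k'(4) k'(1) by simp
  then have zk'C1: "z (1 - int k') \<in> C1" by (simp add: w_def)
  have "{z (- int k'), z (- int k' + 1)} \<in> E" using cseq_edge[OF c] cseq_E[OF c] by blast
  then have "{z (1 - int k'), z (- int k')} \<in> E" by (simp add: insert_commute)
  from mdata_cross[OF md this zk'C1 zk'C2] have ak: "\<alpha> (z (1 - int k')) = z (- int k')" by simp
  define W where "W = map (\<lambda>n. \<alpha> (z ((1 - int k') + int n))) [0..<k']"
  have Ww: "walk V E W" unfolding W_def using segwalk[OF c mdata_aut[OF md] k'(1)] .
  have hW: "hd W = z (- int k')" using k'(1) ak by (simp add: W_def hd_map)
  have lW: "last W = z 1"
  proof -
    have "last W = \<alpha> (z ((1 - int k') + int (k' - 1)))" using k'(1) by (simp add: W_def last_map)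
    also have "(1 - int k') + int (k' - 1) = 0" using k'(1) by simp
    finally show ?thesis using a0 by simp
  qed
  have lenW: "length W = k'" by (simp add: W_def)
  have dl: "dist V E (z (- int k')) (z 1) \<le> k' - 1" using dist_le[OF Ww] hW lW lenW by simp
  from lowb[OF c cg, of "- int k'" 1] obtain s where
    s: "\<bar>s\<bar> \<le> int (dist V E (z (- int k')) (z 1))" "m dvd (1 - (- int k') - s)" by blast
  have "(2 * int k') dvd (1 + int k' - s)" using s(2) mk by simp
  then have "int k' - 1 \<le> \<bar>s\<bar>" using arith2 K2 by blast
  then have "dist V E (z (- int k')) (z 1) = k' - 1" using s(1) dl k'(1) by linarith
  then have sp: "shortest_path V E (z (- int k')) (z 1) W"
    using Ww hW lW lenW k'(1) by (simp add: shortest_path_def)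
  have "Suc (k' - 2) < length W" using lenW K2 by simp
  from cseq_conv[OF c rangeI rangeI sp this] have "{W ! (k' - 2), W ! Suc (k' - 2)} \<in> EC" .
  moreover have "W ! (k' - 2) = \<alpha> (z (-1))"
  proof -
    have "W ! (k' - 2) = \<alpha> (z ((1 - int k') + int (k' - 2)))" using K2 by (simp add: W_def)
    also have "(1 - int k') + int (k' - 2) = -1" using K2 by simp
    finally show ?thesis .
  qed
  moreover have "W ! Suc (k' - 2) = z 1"
  proof -
    have "Suc (k' - 2) = length W - 1" using lenW K2 by simp
    moreover have "W \<noteq> []" using lenW K2 by auto
    ultimately have "W ! Suc (k' - 2) = last W" by (simp add: last_conv_nth)
    then show ?thesis using lW by simp
  qed
  ultimately show ?thesis by (simp add: insert_commute)
qed

lemma ec_mem: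
  assumes c: "cseq V E m z EC" and e: "{x, y} \<in> EC"
  shows "x \<in> range z \<and> y \<in> range z \<and> x \<noteq> y"
proof -
  from e obtain t where "{x, y} = {z t, z (t + 1)}" unfolding cseq_EC[OF c] by (elim rangeE)
  moreover have "z t \<noteq> z (t + 1)" using nb_distinct(2)[OF c] .
  ultimately show ?thesis by (auto simp: doubleton_eq_iff)
qed

lemma refl_step:
  assumes c: "cseq V E m z EC" and cg: "connected_graph V E" and md: "mdata V E \<alpha> C1 C2"
    and ab: "\<alpha> b = c" "\<alpha> c = b" and e1: "{a, b} \<in> EC" and e2: "{b, c} \<in> EC" and ac: "a \<noteq> c"
  shows "{c, \<alpha> a} \<in> EC"
proof -
  obtain p where bp: "b = z p" using ec_mem[OF c e2] by blast
  have "{z p, a} \<in> EC" using e1 bp by (simp add: insert_commute)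
  then have ha: "a = z (p - 1) \<or> a = z (p + 1)" using edge_nb[OF c] by blast
  have "{z p, c} \<in> EC" using e2 bp by simp
  then have hc: "c = z (p - 1) \<or> c = z (p + 1)" using edge_nb[OF c] by blast
  have bV: "b \<in> V" using bp cseq_V[OF c] by simp
  have gen: "\<And>z'. cseq V E m z' EC \<Longrightarrow> z' 0 = b \<Longrightarrow> z' 1 = c \<Longrightarrow> z' (-1) = a \<Longrightarrow> {c, \<alpha> a} \<in> EC"
  proof -
    fix z' assume c': "cseq V E m z' EC" and h: "z' 0 = b" "z' 1 = c" "z' (-1) = a"
    show "{c, \<alpha> a} \<in> EC"
    proof (cases "b \<in> C1")
      case True
      from core[OF c' cg md] show ?thesis using h ab True by simp
    next
      case False
      then have "b \<in> C2" using bV mdata_cov[OF md] by blast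
      from core[OF c' cg mdata_swap[OF md]] show ?thesis using h ab \<open>b \<in> C2\<close> by simp
    qed
  qed
  from ha hc ac show ?thesis
  proof (elim disjE)
    assume "a = z (p - 1)" "c = z (p + 1)"
    then show ?thesis using gen[OF cseq_shift[OF c, of p]] bp by simp
  next
    assume "a = z (p + 1)" "c = z (p - 1)"
    then show ?thesis using gen[OF cseq_refl[OF c, of p]] bp by simp
  qed simp_all
qed

lemma K_step:
  assumes mg: "mirror_graph V E" and cC: "cseq V E m z EC" and cD: "cseq V E m' z' ED"
    and e: "{a, b} \<in> EC" "{b, c} \<in> EC" "{a, b} \<in> ED" "{b, c} \<in> ED" and ac: "a \<noteq> c"
  shows "\<exists>d. d \<noteq> b \<and> {c, d} \<in> EC \<and> {c, d} \<in> ED"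
proof -
  have cg: "connected_graph V E" using mg by (simp add: mirror_graph_def)
  have "{b, c} \<in> E" using e(2) cseq_E[OF cC] by blast
  from mdata_exists[OF mg this] obtain \<alpha> C1 C2 where md: "mdata V E \<alpha> C1 C2" and ab: "\<alpha> b = c" "\<alpha> c = b"
    by blast
  have "{c, \<alpha> a} \<in> EC" using refl_step[OF cC cg md ab e(1,2) ac] .
  moreover have "{c, \<alpha> a} \<in> ED" using refl_step[OF cD cg md ab e(3,4) ac] .
  moreover have "\<alpha> a \<noteq> b"
  proof
    assume "\<alpha> a = b"
    then have "\<alpha> a = \<alpha> c" using ab by simp
    moreover have "a \<in> V" "c \<in> V" using ec_mem[OF cC e(1)] ec_mem[OF cC e(2)] cseq_V[OF cC] by auto
    moreover have "inj_on \<alpha> V" using mdata_aut[OF md] by (simp add: automorphism_def bij_betw_def)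
    ultimately have "a = c" by (simp add: inj_on_def)
    with ac show False ..
  qed
  ultimately show ?thesis by blast
qed

lemma propag:
  assumes mg: "mirror_graph V E" and cC: "cseq V E m z EC" and cD: "cseq V E m' z' ED"
    and b1: "{z (-1), z 0} \<in> ED" and b2: "{z 0, z 1} \<in> ED"
  shows "EC \<subseteq> ED"
proof -
  have P: "{z (int n - 1), z (int n)} \<in> ED \<and> {z (int n), z (int n + 1)} \<in> ED" for n :: nat
  proof (induction n)
    case 0 then show ?case using b1 b2 by simp
  next
    case (Suc n)
    let ?a = "z (int n - 1)" and ?b = "z (int n)" and ?c = "z (int n + 1)"
    have e1: "{?a, ?b} \<in> EC" using cseq_edge[OF cC, of "int n - 1"] by simp
    have e2: "{?b, ?c} \<in> EC" using cseq_edge[OF cC, of "int n"] by simp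
    have ac: "?a \<noteq> ?c" using nb_distinct(1)[OF cC] .
    from K_step[OF mg cC cD e1 e2 _ _ ac] Suc.IH obtain d where
      d: "d \<noteq> ?b" "{?c, d} \<in> EC" "{?c, d} \<in> ED" by blast
    have "d = z (int n + 1 - 1) \<or> d = z (int n + 1 + 1)" using d(2) edge_nb[OF cC] by blast
    then have "d = z (int n + 1 + 1)" using d(1) by simp
    then have "{?c, z (int n + 1 + 1)} \<in> ED" using d(3) by simp
    moreover have "int (Suc n) - 1 = int n" "int (Suc n) = int n + 1" "int (Suc n) + 1 = int n + 1 + 1" by simp_all
    ultimately show ?case using Suc.IH by (simp only:)
  qed
  show ?thesis
  proof
    fix e assume "e \<in> EC"
    then obtain j where j: "e = {z j, z (j + 1)}" unfolding cseq_EC[OF cC] by (elim rangeE)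
    define r where "r = j mod m"
    have m3: "3 \<le> m" using cseq_m[OF cC] .
    then have r0: "0 \<le> r" by (simp add: r_def)
    have "m dvd (j - r)" unfolding r_def by (simp add: mod_0_imp_dvd minus_mod_eq_mult_div[symmetric])
    then have "z j = z r" "z (j + 1) = z (r + 1)" using cseq_eq[OF cC] by simp_all
    moreover have "r = int (nat r)" using r0 by simp
    ultimately have "e = {z (int (nat r)), z (int (nat r) + 1)}" using j by simp
    then show "e \<in> ED" using P by blast
  qed
qed

lemma propag2:
  assumes mg: "mirror_graph V E" and cC: "cseq V E m z EC" and cD: "cseq V E m' z' ED"
    and e: "{u, v} \<in> EC" "{v, w} \<in> EC" "{u, v} \<in> ED" "{v, w} \<in> ED" and uw: "u \<noteq> w"
  shows "EC \<subseteq> ED"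
proof -
  obtain p where vp: "v = z p" using ec_mem[OF cC e(2)] by blast
  have "{z p, u} \<in> EC" using e(1) vp by (simp add: insert_commute)
  then have hu: "u = z (p - 1) \<or> u = z (p + 1)" using edge_nb[OF cC] by blast
  have "{z p, w} \<in> EC" using e(2) vp by simp
  then have hw: "w = z (p - 1) \<or> w = z (p + 1)" using edge_nb[OF cC] by blast
  from hu hw uw show ?thesis
  proof (elim disjE)
    assume h: "u = z (p - 1)" "w = z (p + 1)"
    show ?thesis
    proof (rule propag[OF mg cseq_shift[OF cC, of p] cD])
      show "{z (p + - 1), z (p + 0)} \<in> ED" using e(3) h vp by simp
      show "{z (p + 0), z (p + 1)} \<in> ED" using e(4) h vp by simp
    qed
  next
    assume h: "u = z (p + 1)" "w = z (p - 1)"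
    show ?thesis
    proof (rule propag[OF mg cseq_refl[OF cC, of p] cD])
      show "{z (p - - 1), z (p - 0)} \<in> ED" using e(3) h vp by simp
      show "{z (p - 0), z (p - 1)} \<in> ED" using e(4) h vp by simp
    qed
  qed simp_all
qed

definition cyc :: "'a list \<Rightarrow> int \<Rightarrow> 'a" where
  "cyc C j = C ! nat (j mod int (length C))"

lemma cyc_nat: "i < length C \<Longrightarrow> cyc C (int i) = C ! i"
  unfolding cyc_def by (simp add: zmod_int[symmetric])

lemma cyc_cseq:
  assumes cc: "convex_cycle V E C"
  shows "cseq V E (int (length C)) (cyc C) (cycle_edges C)" and "range (cyc C) = set C"
proof -
  let ?n = "length C"
  have ic: "3 \<le> ?n" "distinct C" "set C \<subseteq> V" "cycle_edges C \<subseteq> E" using cc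
    by (auto simp: convex_cycle_def is_cycle_def)
  have npos: "0 < int ?n" using ic(1) by linarith
  have cl: "nat (j mod int ?n) < ?n" for j
    using npos by (simp add: nat_less_iff)
  show rg: "range (cyc C) = set C"
  proof
    show "range (cyc C) \<subseteq> set C" using cl by (auto simp: cyc_def)
    show "set C \<subseteq> range (cyc C)"
    proof
      fix x assume "x \<in> set C"
      then obtain i where "i < ?n" "x = C ! i" by (auto simp: in_set_conv_nth)
      then have "x = cyc C (int i)" by (simp add: cyc_nat)
      then show "x \<in> range (cyc C)" by blast
    qed
  qed
  have eq: "cyc C j = cyc C k \<longleftrightarrow> int ?n dvd (j - k)" for j k
  proof -
    have "cyc C j = cyc C k \<longleftrightarrow> nat (j mod int ?n) = nat (k mod int ?n)"
      unfolding cyc_def using ic(2) cl by (simp add: nth_eq_iff_index_eq)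
    also have "\<dots> \<longleftrightarrow> j mod int ?n = k mod int ?n" using npos by (auto simp: nat_eq_iff2)
    also have "\<dots> \<longleftrightarrow> int ?n dvd (j - k)" by (simp add: mod_eq_dvd_iff)
    finally show ?thesis .
  qed
  have ed: "cycle_edges C = range (\<lambda>j. {cyc C j, cyc C (j + 1)})"
  proof
    show "cycle_edges C \<subseteq> range (\<lambda>j. {cyc C j, cyc C (j + 1)})"
    proof
      fix e assume "e \<in> cycle_edges C"
      then obtain i where i: "i < ?n" "e = {C ! i, C ! ((i + 1) mod ?n)}" by (auto simp: cycle_edges_def)
      have "cyc C (int i + 1) = C ! ((i + 1) mod ?n)"
      proof -
        have "int i + 1 = int (i + 1)" by simp
        then have "cyc C (int i + 1) = C ! nat (int (i + 1) mod int ?n)" by (simp add: cyc_def add.commute)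
        also have "int (i + 1) mod int ?n = int ((i + 1) mod ?n)" by (simp add: zmod_int)
        finally show ?thesis by simp
      qed
      then have "e = {cyc C (int i), cyc C (int i + 1)}" using i by (simp add: cyc_nat)
      then show "e \<in> range (\<lambda>j. {cyc C j, cyc C (j + 1)})" by blast
    qed
    show "range (\<lambda>j. {cyc C j, cyc C (j + 1)}) \<subseteq> cycle_edges C"
    proof
      fix e assume "e \<in> range (\<lambda>j. {cyc C j, cyc C (j + 1)})"
      then obtain j where j: "e = {cyc C j, cyc C (j + 1)}" by auto
      define i where "i = nat (j mod int ?n)"
      have i: "i < ?n" using cl i_def by simp
      have ji: "j mod int ?n = int i" using npos by (simp add: i_def)
      have "(j + 1) mod int ?n = (int i + 1) mod int ?n" using ji by (metis mod_add_left_eq)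
      also have "\<dots> = int ((i + 1) mod ?n)" by (simp add: zmod_int add.commute)
      finally have "cyc C (j + 1) = C ! ((i + 1) mod ?n)" by (simp add: cyc_def)
      moreover have "cyc C j = C ! i" by (simp add: cyc_def i_def)
      ultimately have "e = {C ! i, C ! ((i + 1) mod ?n)}" using j by simp
      then show "e \<in> cycle_edges C" using i by (auto simp: cycle_edges_def)
    qed
  qed
  have conv: "\<forall>u\<in>range (cyc C). \<forall>v\<in>range (cyc C). \<forall>p. shortest_path V E u v p \<longrightarrow>
        (\<forall>i. Suc i < length p \<longrightarrow> {p ! i, p ! Suc i} \<in> cycle_edges C)"
    using cc unfolding rg convex_cycle_def by blast
  show "cseq V E (int (length C)) (cyc C) (cycle_edges C)"
    unfolding cseq_def using ic eq ed rg conv by simp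
qed

lemma walk_drop2:
  assumes "walk V E p" "2 < length p" shows "walk V E (drop 2 p)"
  using assms unfolding walk_def
  by (auto simp: set_drop_subset[THEN subset_trans] dest: in_set_dropD)

theorem mainTheorem11:
  fixes V :: "'a set" and E :: "'a set set" and C D :: "'a list"
  assumes "mirror_graph V E"
    and "convex_cycle V E C" and "convex_cycle V E D"
    and "cycle_edges C \<noteq> cycle_edges D"
  shows "set C \<inter> set D = {} \<or> (\<exists>v. set C \<inter> set D = {v}) \<or>
         (\<exists>u v. set C \<inter> set D = {u, v} \<and> cycle_edges C \<inter> cycle_edges D = {{u, v}})"
proof (rule ccontr)
  assume neg: "\<not> ?thesis"
  note mg = assms(1)
  have cg: "connected_graph V E" using mg by (simp add: mirror_graph_def)
  let ?EC = "cycle_edges C" and ?ED = "cycle_edges D"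
  have cC: "cseq V E (int (length C)) (cyc C) ?EC" and rC: "range (cyc C) = set C"
    using cyc_cseq[OF assms(2)] by auto
  have cD: "cseq V E (int (length D)) (cyc D) ?ED" and rD: "range (cyc D) = set D"
    using cyc_cseq[OF assms(3)] by auto
  have nogood: False if "{u, v} \<in> ?EC" "{v, w} \<in> ?EC" "{u, v} \<in> ?ED" "{v, w} \<in> ?ED" "u \<noteq> w" for u v w
  proof -
    have "?EC \<subseteq> ?ED" using propag2[OF mg cC cD that] .
    moreover have "?ED \<subseteq> ?EC" using propag2[OF mg cD cC that(3,4,1,2,5)] .
    ultimately show False using assms(4) by blast
  qed
  let ?S = "set C \<inter> set D"
  have G1: "{u, v} \<in> ?EC \<and> {u, v} \<in> ?ED" if uv: "u \<in> ?S" "v \<in> ?S" "u \<noteq> v" for u v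
  proof -
    have "u \<in> V" "v \<in> V" using uv assms(2) by (auto simp: convex_cycle_def is_cycle_def)
    then have "reachable V E u v" using cg by (simp add: connected_graph_def)
    then obtain p where p: "shortest_path V E u v p" using sp_exists by metis
    have pw: "walk V E p" "hd p = u" "last p = v" "length p = Suc (dist V E u v)"
      using p by (auto simp: shortest_path_def)
    have pne: "p \<noteq> []" using pw(1) by (simp add: walk_def)
    have eC: "{p ! i, p ! Suc i} \<in> ?EC" if "Suc i < length p" for i
      using cseq_conv[OF cC _ _ p that] uv rC by auto
    have eD: "{p ! i, p ! Suc i} \<in> ?ED" if "Suc i < length p" for i
      using cseq_conv[OF cD _ _ p that] uv rD by auto
    have l2: "2 \<le> length p"
    proof (rule ccontr)
      assume "\<not> 2 \<le> length p"
      then have "length p = 1" using pne by (cases p) (auto simp: not_less_eq_eq)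
      then have "hd p = last p" by (cases p) auto
      then show False using pw uv by simp
    qed
    have l3: "\<not> 2 < length p"
    proof
      assume l: "2 < length p"
      have ne: "p ! 0 \<noteq> p ! 2"
      proof
        assume eq: "p ! 0 = p ! 2"
        have w: "walk V E (drop 2 p)" using walk_drop2[OF pw(1) l] .
        have "hd (drop 2 p) = p ! 2" using l by (simp add: hd_drop_conv_nth)
        then have "hd (drop 2 p) = u" using eq pw(2) pne by (simp add: hd_conv_nth)
        moreover have "last (drop 2 p) = v" using l pw(3) by simp
        ultimately have "dist V E u v \<le> length (drop 2 p) - 1" using dist_le[OF w] by simp
        then show False using pw(4) l by simp
      qed
      have s2: "Suc 1 = 2" by simp
      have "{p ! 0, p ! 1} \<in> ?EC" "{p ! 1, p ! 2} \<in> ?EC" "{p ! 0, p ! 1} \<in> ?ED" "{p ! 1, p ! 2} \<in> ?ED"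
        using eC[of 0] eC[of 1] eD[of 0] eD[of 1] l unfolding s2 by simp_all
      then show False using nogood ne by blast
    qed
    then have "length p = 2" using l2 by simp
    moreover have "p ! 0 = u" using pw(2) pne by (simp add: hd_conv_nth)
    moreover have "p ! 1 = v" using pw(3) pne \<open>length p = 2\<close> by (simp add: last_conv_nth)
    ultimately show ?thesis using eC[of 0] eD[of 0] by simp
  qed
  have "?S \<noteq> {}" using neg by blast
  then obtain u where u: "u \<in> ?S" by blast
  have "?S \<noteq> {u}" using neg by blast
  then obtain v where v: "v \<in> ?S" "v \<noteq> u" using u by blast
  have Suv: "?S = {u, v}"
  proof
    show "{u, v} \<subseteq> ?S" using u v by simp
    show "?S \<subseteq> {u, v}"
    proof
      fix w assume w: "w \<in> ?S"
      show "w \<in> {u, v}"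
      proof (rule ccontr)
        assume "w \<notin> {u, v}"
        then have "w \<noteq> u" "w \<noteq> v" by auto
        have "{u, v} \<in> ?EC \<and> {u, v} \<in> ?ED" using G1[OF u v(1)] v(2) by simp
        moreover have "{v, w} \<in> ?EC \<and> {v, w} \<in> ?ED" using G1[OF v(1) w] \<open>w \<noteq> v\<close> by simp
        ultimately show False using nogood \<open>w \<noteq> u\<close> by blast
      qed
    qed
  qed
  have Euv: "?EC \<inter> ?ED = {{u, v}}"
  proof
    show "{{u, v}} \<subseteq> ?EC \<inter> ?ED" using G1[OF u v(1)] v(2) by simp
    show "?EC \<inter> ?ED \<subseteq> {{u, v}}"
    proof
      fix e assume e: "e \<in> ?EC \<inter> ?ED"
      then obtain j where j: "e = {cyc C j, cyc C (j + 1)}" unfolding cseq_EC[OF cC] by blast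
      let ?x = "cyc C j" and ?y = "cyc C (j + 1)"
      have "?x \<in> set C" "?y \<in> set C" "?x \<noteq> ?y" using ec_mem[OF cC, of ?x ?y] e j rC by auto
      moreover have "?x \<in> set D" "?y \<in> set D" using ec_mem[OF cD, of ?x ?y] e j rD by auto
      ultimately have "?x \<in> {u, v}" "?y \<in> {u, v}" "?x \<noteq> ?y" using Suv by blast+
      then have "e = {u, v}" using j by auto
      then show "e \<in> {{u, v}}" by simp
    qed
  qed
  show False using neg Suv Euv by blast
qed

end
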